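(* Let $(\mathsf{E},\mathcal{F},\mu)$ be a probability space and let $P$ be a $\mu$-invariant Markov kernel on $\mathsf{E}$ such that, for some measurable $\varepsilon:\mathsf{E}\to[0,1]$, $P(x,A)\ge\varepsilon(x)\,\delta_{x}(A)$ for all $(x,A)\in\mathsf{E}\times\mathcal{F}$. Then: (1) for all $(x,A)\in\mathsf{E}\times\mathcal{F}$, $P^{2}(x,A)\ge\varepsilon(x)P(x,A)$; (2) for any $p\in(1,\infty]$, with $1/q=1-1/p$, any $f\in\mathrm{L}_{0}^{2p}(\mu)$ and any $s>0$, \[ \mathcal{E}(P,f)\le s\,\mathcal{E}(P^{2},f)+\mu\big(\varepsilon(X)^{-1}\ge s\big)^{1/q}\,\Phi_{p}(f), \] where $\Phi_{p}(f):=4\|f\|_{2p}^{2}$ if $p\in(1,\infty)$ and $\Phi_{\infty}(f):=\|f\|_{\mathrm{osc}}^{2}$.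
   Context: $\delta_{x}$ is the point mass at $x$; $\varepsilon(x)^{-1}=\infty$ when $\varepsilon(x)=0$. $\mathrm{L}_{0}^{r}(\mu)$ consists of $f$ with $\int|f|^{r}\mathrm{d}\mu<\infty$ and $\mu(f)=0$, $\|f\|_{r}=(\int|f|^{r}\mathrm{d}\mu)^{1/r}$, and $\|f\|_{\mathrm{osc}}:=\operatorname{ess\,sup}_{\mu}f-\operatorname{ess\,inf}_{\mu}f$. For a Markov kernel $T$, $\mathcal{E}(T,f):=\langle(\mathrm{Id}-T)f,f\rangle$ in $\mathrm{L}^{2}(\mu)$. *)

theory Defs
  imports "HOL-Probability.Probability"
begin

definition kop :: "('a \<Rightarrow> 'a measure) \<Rightarrow> ('a \<Rightarrow> real) \<Rightarrow> 'a \<Rightarrow> real" where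
  "kop T f x = (\<integral>y. f y \<partial>(T x))"

definition ksq :: "('a \<Rightarrow> 'a measure) \<Rightarrow> 'a \<Rightarrow> 'a measure" where
  "ksq P x = (P x \<bind> P)"

definition dirichlet :: "'a measure \<Rightarrow> ('a \<Rightarrow> 'a measure) \<Rightarrow> ('a \<Rightarrow> real) \<Rightarrow> real" where
  "dirichlet M T f = (\<integral>x. (f x - kop T f x) * f x \<partial>M)"

definition osc_norm :: "'a measure \<Rightarrow> ('a \<Rightarrow> real) \<Rightarrow> real" where
  "osc_norm M f = real_of_ereal (esssup M (\<lambda>x. ereal (f x)) - (- esssup M (\<lambda>x. ereal (- f x))))"

definition lr_norm :: "'a measure \<Rightarrow> real \<Rightarrow> ('a \<Rightarrow> real) \<Rightarrow> real" where
  "lr_norm M r f = (\<integral>x. \<bar>f x\<bar> powr r \<partial>M) powr (1 / r)"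

end

theory Submission
  imports Defs
begin


lemma abs_le_1_sq: fixes a :: real shows "\<bar>a\<bar> \<le> \<bar>1 + a\<^sup>2\<bar>"
proof -
  have "0 \<le> (\<bar>a\<bar> - 1)\<^sup>2" by simp
  then have "0 \<le> a\<^sup>2 - 2 * \<bar>a\<bar> + 1" by (simp add: power2_eq_square algebra_simps abs_mult_self_eq)
  then show ?thesis by (simp add: abs_if)
qed

locale kern = prob_space M for M :: "'a measure" +
  fixes T :: "'a \<Rightarrow> 'a measure"
  assumes T: "T \<in> M \<rightarrow>\<^sub>M prob_algebra M" and inv: "M \<bind> T = M"
begin

lemma Tsub: "T \<in> M \<rightarrow>\<^sub>M subprob_algebra M"
  using T by (rule measurable_prob_algebraD)

lemma T_in: "x \<in> space M \<Longrightarrow> T x \<in> space (prob_algebra M)"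
  using T by (auto dest: measurable_space)

lemma T_prob: "x \<in> space M \<Longrightarrow> prob_space (T x)"
  using T_in by (auto simp: space_prob_algebra)

lemma T_fin: "x \<in> space M \<Longrightarrow> finite_measure (T x)"
  using T_prob prob_space.axioms(1) by blast

lemma T_sets: "x \<in> space M \<Longrightarrow> sets (T x) = sets M"
  using T_in by (auto simp: space_prob_algebra)

lemma T_space: "x \<in> space M \<Longrightarrow> space (T x) = space M"
  using T_sets by (rule sets_eq_imp_space_eq)

lemma nn_inv: "g \<in> borel_measurable M \<Longrightarrow> (\<integral>\<^sup>+x. \<integral>\<^sup>+y. g y \<partial>T x \<partial>M) = (\<integral>\<^sup>+x. g x \<partial>M)"
  using nn_integral_bind[OF _ Tsub, of g] inv by simp

lemma AE_inv:
  assumes "Measurable.pred M Q" "AE x in M. Q x"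
  shows "AE x in M. AE y in T x. Q y"
  using AE_bind[OF Tsub assms(1)] inv assms(2) by metis

lemma nn_meas: "g \<in> borel_measurable M \<Longrightarrow> (\<lambda>x. \<integral>\<^sup>+y. g y \<partial>T x) \<in> borel_measurable M"
  by (rule measurable_compose[OF Tsub nn_integral_measurable_subprob_algebra])

lemma int_meas: "(g::'a\<Rightarrow>real) \<in> borel_measurable M \<Longrightarrow> (\<lambda>x. \<integral>y. g y \<partial>T x) \<in> borel_measurable M"
  by (rule measurable_compose[OF Tsub integral_measurable_subprob_algebra])

lemma sq_int_fin:
  fixes f :: "'a \<Rightarrow> real"
  assumes f: "f \<in> borel_measurable M" and f2: "integrable M (\<lambda>x. (f x)\<^sup>2)"
  shows "AE x in M. integrable (T x) (\<lambda>y. (f y)\<^sup>2) \<and> integrable (T x) f"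
proof -
  have "(\<integral>\<^sup>+x. \<integral>\<^sup>+y. ennreal ((f y)\<^sup>2) \<partial>T x \<partial>M) = (\<integral>\<^sup>+x. ennreal ((f x)\<^sup>2) \<partial>M)"
    using f by (intro nn_inv) measurable
  also have "\<dots> < \<infinity>"
    using f2 by (simp add: nn_integral_eq_integral)
  finally have lt: "(\<integral>\<^sup>+x. \<integral>\<^sup>+y. ennreal ((f y)\<^sup>2) \<partial>T x \<partial>M) \<noteq> \<infinity>"
    by simp
  have m: "(\<lambda>y. ennreal ((f y)\<^sup>2)) \<in> borel_measurable M" using f by measurable
  have "AE x in M. (\<integral>\<^sup>+y. ennreal ((f y)\<^sup>2) \<partial>T x) \<noteq> \<infinity>"
    by (rule nn_integral_PInf_AE[OF nn_meas[OF m] lt])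
  then show ?thesis
  proof (rule AE_mp)
    show "AE x in M. (\<integral>\<^sup>+y. ennreal ((f y)\<^sup>2) \<partial>T x) \<noteq> \<infinity> \<longrightarrow> integrable (T x) (\<lambda>y. (f y)\<^sup>2) \<and> integrable (T x) f"
    proof (intro AE_I2 impI)
    fix x assume x: "x \<in> space M" and fin: "(\<integral>\<^sup>+y. ennreal ((f y)\<^sup>2) \<partial>T x) \<noteq> \<infinity>"
    have fm: "f \<in> borel_measurable (T x)"
      unfolding measurable_cong_sets[OF T_sets[OF x] refl] by (rule f)
    note fm[measurable]
    have fm2: "(\<lambda>y. (f y)\<^sup>2) \<in> borel_measurable (T x)" by measurable
    have "(\<integral>\<^sup>+y. ennreal (norm ((f y)\<^sup>2)) \<partial>T x) = (\<integral>\<^sup>+y. ennreal ((f y)\<^sup>2) \<partial>T x)"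
      by simp
    also have "\<dots> < \<infinity>" using fin by (simp add: less_top)
    finally have fin2: "(\<integral>\<^sup>+y. ennreal (norm ((f y)\<^sup>2)) \<partial>T x) < \<infinity>" .
    have i2: "integrable (T x) (\<lambda>y. (f y)\<^sup>2)"
      by (rule integrableI_bounded[OF fm2 fin2])
    have "integrable (T x) (\<lambda>y. 1 + (f y)\<^sup>2)"
      by (rule Bochner_Integration.integrable_add[OF finite_measure.integrable_const[OF T_fin[OF x]] i2])
    then have "integrable (T x) f"
    proof (rule Bochner_Integration.integrable_bound)
      show "f \<in> borel_measurable (T x)" by (rule fm)
      show "AE y in T x. norm (f y) \<le> norm (1 + (f y)\<^sup>2)"
        using abs_le_1_sq by simp
    qed
    with i2 show "integrable (T x) (\<lambda>y. (f y)\<^sup>2) \<and> integrable (T x) f" by simp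
  qed
  qed
qed

end

lemma (in prob_space) sq_expand:
  fixes f :: "'a \<Rightarrow> real"
  assumes "integrable M f" "integrable M (\<lambda>y. (f y)\<^sup>2)"
  shows "integrable M (\<lambda>y. (f y - c)\<^sup>2)"
    "(\<integral>y. (f y - c)\<^sup>2 \<partial>M) = (\<integral>y. (f y)\<^sup>2 \<partial>M) - 2 * c * (\<integral>y. f y \<partial>M) + c\<^sup>2"
proof -
  have e: "(\<lambda>y. (f y - c)\<^sup>2) = (\<lambda>y. ((f y)\<^sup>2 - 2 * c * f y) + c\<^sup>2)"
    by (auto simp: power2_eq_square algebra_simps)
  have i: "integrable M (\<lambda>y. ((f y)\<^sup>2 - 2 * c * f y) + c\<^sup>2)"
    by (intro Bochner_Integration.integrable_add Bochner_Integration.integrable_diff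
        integrable_mult_right assms integrable_const)
  then show "integrable M (\<lambda>y. (f y - c)\<^sup>2)" unfolding e .
  have "(\<integral>y. ((f y)\<^sup>2 - 2 * c * f y) + c\<^sup>2 \<partial>M) = (\<integral>y. (f y)\<^sup>2 - 2 * c * f y \<partial>M) + (\<integral>y. c\<^sup>2 \<partial>M)"
    by (intro Bochner_Integration.integral_add Bochner_Integration.integrable_diff
        integrable_mult_right assms integrable_const)
  also have "(\<integral>y. (f y)\<^sup>2 - 2 * c * f y \<partial>M) = (\<integral>y. (f y)\<^sup>2 \<partial>M) - (\<integral>y. 2 * c * f y \<partial>M)"
    by (intro Bochner_Integration.integral_diff integrable_mult_right assms)
  also have "(\<integral>y. 2 * c * f y \<partial>M) = 2 * c * (\<integral>y. f y \<partial>M)"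
    by simp
  also have "(\<integral>y. c\<^sup>2 \<partial>M) = c\<^sup>2"
    by (simp add: prob_space)
  finally show "(\<integral>y. (f y - c)\<^sup>2 \<partial>M) = (\<integral>y. (f y)\<^sup>2 \<partial>M) - 2 * c * (\<integral>y. f y \<partial>M) + c\<^sup>2"
    unfolding e .
qed


lemma abs_mult_le_sq: fixes a b :: real shows "\<bar>a * b\<bar> \<le> a\<^sup>2 + b\<^sup>2"
proof -
  have "0 \<le> (\<bar>a\<bar> - \<bar>b\<bar>)\<^sup>2" by simp
  moreover have "(\<bar>a\<bar> - \<bar>b\<bar>)\<^sup>2 = a\<^sup>2 + b\<^sup>2 - 2 * (\<bar>a\<bar> * \<bar>b\<bar>)"
    unfolding power2_diff by simp
  moreover have "\<bar>a * b\<bar> = \<bar>a\<bar> * \<bar>b\<bar>" by (rule abs_mult)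
  moreover have "0 \<le> \<bar>a\<bar> * \<bar>b\<bar>" by simp
  ultimately show ?thesis by linarith
qed

lemma point_minor:
  fixes G :: "'a \<Rightarrow> ennreal"
  assumes N: "sets N = sets M" "prob_space N"
    and x: "x \<in> space M" and e: "0 \<le> e"
    and minor: "\<forall>A\<in>sets M. measure N A \<ge> e * indicator A x"
    and G: "G \<in> borel_measurable M"
  shows "ennreal e * G x \<le> (\<integral>\<^sup>+y. G y \<partial>N)"
proof -
  interpret N: prob_space N by fact
  define A where "A = {y\<in>space M. G x \<le> G y}"
  have A: "A \<in> sets M" unfolding A_def using G by measurable
  have "e \<le> measure N A" using minor A x by (auto simp: A_def)
  then have "ennreal e \<le> emeasure N A" using N(1) A by (simp add: N.emeasure_eq_measure)
  then have "ennreal e * G x \<le> G x * emeasure N A"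
    by (subst mult.commute) (rule mult_left_mono, auto)
  also have "G x * emeasure N A = (\<integral>\<^sup>+y. G x * indicator A y \<partial>N)"
    using A N(1) by (simp add: nn_integral_cmult_indicator)
  also have "\<dots> \<le> (\<integral>\<^sup>+y. G y \<partial>N)"
    by (intro nn_integral_mono) (auto simp: A_def split: split_indicator)
  finally show ?thesis .
qed

lemma (in kern) dir_eq:
  fixes f :: "'a \<Rightarrow> real"
  assumes f: "f \<in> borel_measurable M" and f2: "integrable M (\<lambda>x. (f x)\<^sup>2)"
  shows "(\<integral>\<^sup>+x. \<integral>\<^sup>+y. ennreal ((f y - f x)\<^sup>2) \<partial>T x \<partial>M) = ennreal (2 * dirichlet M T f)"
    "0 \<le> dirichlet M T f"
proof -
  define k1 where "k1 = kop T f"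
  define k2 where "k2 = kop T (\<lambda>y. (f y)\<^sup>2)"
  define Q where "Q x = k2 x - 2 * f x * k1 x + (f x)\<^sup>2" for x
  note f[measurable]
  have f2m: "(\<lambda>y. (f y)\<^sup>2) \<in> borel_measurable M" by measurable
  have k1m: "k1 \<in> borel_measurable M" unfolding k1_def kop_def by (rule int_meas[OF f])
  have k2m: "k2 \<in> borel_measurable M" unfolding k2_def kop_def by (rule int_meas[OF f2m])
  have k2_nonneg: "0 \<le> k2 x" for x unfolding k2_def kop_def
    by (rule integral_nonneg_AE, rule AE_I2, simp)
  note AEi = sq_int_fin[OF f f2]
  have AEe: "AE x in M. (\<integral>\<^sup>+y. ennreal ((f y - f x)\<^sup>2) \<partial>T x) = ennreal (Q x) \<and> 0 \<le> Q x
     \<and> (k1 x)\<^sup>2 \<le> k2 x \<and> (\<integral>\<^sup>+y. ennreal ((f y)\<^sup>2) \<partial>T x) = ennreal (k2 x)"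
    using AEi
  proof (rule AE_mp)
    show "AE x in M. integrable (T x) (\<lambda>y. (f y)\<^sup>2) \<and> integrable (T x) f \<longrightarrow>
     (\<integral>\<^sup>+y. ennreal ((f y - f x)\<^sup>2) \<partial>T x) = ennreal (Q x) \<and> 0 \<le> Q x
     \<and> (k1 x)\<^sup>2 \<le> k2 x \<and> (\<integral>\<^sup>+y. ennreal ((f y)\<^sup>2) \<partial>T x) = ennreal (k2 x)"
    proof (intro AE_I2 impI)
      fix x assume x: "x \<in> space M" and ii: "integrable (T x) (\<lambda>y. (f y)\<^sup>2) \<and> integrable (T x) f"
      have PT: "prob_space (T x)" by (rule T_prob[OF x])
      from ii have i2: "integrable (T x) (\<lambda>y. (f y)\<^sup>2)" and i1: "integrable (T x) f" by blast+
      note se1 = prob_space.sq_expand(1)[OF PT i1 i2]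
      note se2 = prob_space.sq_expand(2)[OF PT i1 i2]
      have "(\<integral>\<^sup>+y. ennreal ((f y - f x)\<^sup>2) \<partial>T x) = ennreal (\<integral>y. (f y - f x)\<^sup>2 \<partial>T x)"
        by (rule nn_integral_eq_integral[OF se1], rule AE_I2, simp)
      also have "(\<integral>y. (f y - f x)\<^sup>2 \<partial>T x) = Q x"
        unfolding se2 by (simp add: Q_def k1_def k2_def kop_def)
      finally have 1: "(\<integral>\<^sup>+y. ennreal ((f y - f x)\<^sup>2) \<partial>T x) = ennreal (Q x)" .
      have "0 \<le> (\<integral>y. (f y - f x)\<^sup>2 \<partial>T x)" by (rule integral_nonneg_AE, rule AE_I2, simp)
      then have 2: "0 \<le> Q x"
        unfolding se2 by (simp add: Q_def k1_def k2_def kop_def)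
      have "0 \<le> (\<integral>y. (f y - k1 x)\<^sup>2 \<partial>T x)" by (rule integral_nonneg_AE, rule AE_I2, simp)
      then have 3: "(k1 x)\<^sup>2 \<le> k2 x"
        unfolding se2 by (simp add: k1_def k2_def kop_def power2_eq_square)
      have 4: "(\<integral>\<^sup>+y. ennreal ((f y)\<^sup>2) \<partial>T x) = ennreal (k2 x)"
        unfolding k2_def kop_def by (rule nn_integral_eq_integral[OF i2], rule AE_I2, simp)
      show "(\<integral>\<^sup>+y. ennreal ((f y - f x)\<^sup>2) \<partial>T x) = ennreal (Q x) \<and> 0 \<le> Q x
       \<and> (k1 x)\<^sup>2 \<le> k2 x \<and> (\<integral>\<^sup>+y. ennreal ((f y)\<^sup>2) \<partial>T x) = ennreal (k2 x)"
        using 1 2 3 4 by blast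
    qed
  qed
  have k2_nn: "(\<integral>\<^sup>+x. ennreal (k2 x) \<partial>M) = (\<integral>\<^sup>+x. ennreal ((f x)\<^sup>2) \<partial>M)"
  proof -
    have "(\<integral>\<^sup>+x. ennreal (k2 x) \<partial>M) = (\<integral>\<^sup>+x. \<integral>\<^sup>+y. ennreal ((f y)\<^sup>2) \<partial>T x \<partial>M)"
      by (rule nn_integral_cong_AE, rule AE_mp[OF AEe], rule AE_I2) simp
    also have "\<dots> = (\<integral>\<^sup>+x. ennreal ((f x)\<^sup>2) \<partial>M)"
      by (rule nn_inv) measurable
    finally show ?thesis .
  qed
  have f2nn: "(\<integral>\<^sup>+x. ennreal ((f x)\<^sup>2) \<partial>M) = ennreal (\<integral>x. (f x)\<^sup>2 \<partial>M)"
    by (rule nn_integral_eq_integral[OF f2], rule AE_I2, simp)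
  have k2i: "integrable M k2"
  proof (rule integrableI_bounded)
    show "k2 \<in> borel_measurable M" by (rule k2m)
    have "(\<integral>\<^sup>+x. ennreal (norm (k2 x)) \<partial>M) = (\<integral>\<^sup>+x. ennreal (k2 x) \<partial>M)"
      by (rule nn_integral_cong) (simp add: k2_nonneg)
    then show "(\<integral>\<^sup>+x. ennreal (norm (k2 x)) \<partial>M) < \<infinity>"
      using k2_nn f2nn by simp
  qed
  have int_k2: "(\<integral>x. k2 x \<partial>M) = (\<integral>x. (f x)\<^sup>2 \<partial>M)"
  proof -
    have "ennreal (\<integral>x. k2 x \<partial>M) = ennreal (\<integral>x. (f x)\<^sup>2 \<partial>M)"
      using nn_integral_eq_integral[OF k2i AE_I2[of M, OF k2_nonneg]] k2_nn f2nn by simp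
    moreover have "0 \<le> (\<integral>x. k2 x \<partial>M)" by (rule integral_nonneg_AE, rule AE_I2, rule k2_nonneg)
    moreover have "0 \<le> (\<integral>x. (f x)\<^sup>2 \<partial>M)" by (rule integral_nonneg_AE, rule AE_I2, simp)
    ultimately show ?thesis by simp
  qed
  have fk1i: "integrable M (\<lambda>x. f x * k1 x)"
  proof (rule Bochner_Integration.integrable_bound)
    show "integrable M (\<lambda>x. (f x)\<^sup>2 + k2 x)" by (rule Bochner_Integration.integrable_add[OF f2 k2i])
    show "(\<lambda>x. f x * k1 x) \<in> borel_measurable M" using k1m by measurable
    show "AE x in M. norm (f x * k1 x) \<le> norm ((f x)\<^sup>2 + k2 x)"
    proof (rule AE_mp[OF AEe], rule AE_I2, rule impI)
      fix x assume "x \<in> space M" and h: "(\<integral>\<^sup>+y. ennreal ((f y - f x)\<^sup>2) \<partial>T x) = ennreal (Q x) \<and> 0 \<le> Q x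
       \<and> (k1 x)\<^sup>2 \<le> k2 x \<and> (\<integral>\<^sup>+y. ennreal ((f y)\<^sup>2) \<partial>T x) = ennreal (k2 x)"
      have "\<bar>f x * k1 x\<bar> \<le> (f x)\<^sup>2 + (k1 x)\<^sup>2" by (rule abs_mult_le_sq)
      also have "\<dots> \<le> (f x)\<^sup>2 + k2 x" using h by simp
      finally show "norm (f x * k1 x) \<le> norm ((f x)\<^sup>2 + k2 x)" using k2_nonneg[of x] by simp
    qed
  qed
  have Qi: "integrable M Q" unfolding Q_def mult.assoc
    by (intro Bochner_Integration.integrable_add Bochner_Integration.integrable_diff k2i f2
        integrable_mult_right fk1i)
  have "(\<integral>\<^sup>+x. \<integral>\<^sup>+y. ennreal ((f y - f x)\<^sup>2) \<partial>T x \<partial>M) = (\<integral>\<^sup>+x. ennreal (Q x) \<partial>M)"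
    by (rule nn_integral_cong_AE, rule AE_mp[OF AEe], rule AE_I2) simp
  also have "\<dots> = ennreal (\<integral>x. Q x \<partial>M)"
    by (rule nn_integral_eq_integral[OF Qi], rule AE_mp[OF AEe], rule AE_I2) simp
  also have Qd: "(\<integral>x. Q x \<partial>M) = 2 * dirichlet M T f"
  proof -
    have "(\<integral>x. Q x \<partial>M) = (\<integral>x. k2 x \<partial>M) - (\<integral>x. 2 * (f x * k1 x) \<partial>M) + (\<integral>x. (f x)\<^sup>2 \<partial>M)"
      unfolding Q_def mult.assoc
      by (simp add: Bochner_Integration.integral_add Bochner_Integration.integral_diff
          Bochner_Integration.integrable_diff k2i fk1i f2)
    also have "(\<integral>x. 2 * (f x * k1 x) \<partial>M) = 2 * (\<integral>x. f x * k1 x \<partial>M)" by simp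
    finally have a: "(\<integral>x. Q x \<partial>M) = (\<integral>x. k2 x \<partial>M) - 2 * (\<integral>x. f x * k1 x \<partial>M) + (\<integral>x. (f x)\<^sup>2 \<partial>M)" .
    have b: "dirichlet M T f = (\<integral>x. (f x)\<^sup>2 - f x * k1 x \<partial>M)"
      unfolding dirichlet_def k1_def[symmetric]
      by (rule Bochner_Integration.integral_cong) (simp_all add: power2_eq_square algebra_simps)
    have c: "(\<integral>x. (f x)\<^sup>2 - f x * k1 x \<partial>M) = (\<integral>x. (f x)\<^sup>2 \<partial>M) - (\<integral>x. f x * k1 x \<partial>M)"
      by (rule Bochner_Integration.integral_diff[OF f2 fk1i])
    show ?thesis using a b c int_k2 by simp
  qed
  finally show "(\<integral>\<^sup>+x. \<integral>\<^sup>+y. ennreal ((f y - f x)\<^sup>2) \<partial>T x \<partial>M) = ennreal (2 * dirichlet M T f)" .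
  have "0 \<le> (\<integral>x. Q x \<partial>M)"
    by (rule integral_nonneg_AE, rule AE_mp[OF AEe], rule AE_I2) simp
  with Qd show "0 \<le> dirichlet M T f" by simp
qed

locale mk = prob_space M for M :: "'a measure" +
  fixes P :: "'a \<Rightarrow> 'a measure" and \<epsilon> :: "'a \<Rightarrow> real"
  assumes kernel: "P \<in> M \<rightarrow>\<^sub>M prob_algebra M" and invM: "M \<bind> P = M"
    and eps_meas: "\<epsilon> \<in> borel_measurable M"
    and eps_range: "\<forall>x\<in>space M. 0 \<le> \<epsilon> x \<and> \<epsilon> x \<le> 1"
    and minor: "\<forall>x\<in>space M. \<forall>A\<in>sets M. measure (P x) A \<ge> \<epsilon> x * indicator A x"
begin

sublocale K1: kern M P
  using kernel invM by unfold_locales auto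

lemma ksq_meas: "ksq P \<in> M \<rightarrow>\<^sub>M prob_algebra M"
  unfolding ksq_def using measurable_bind_prob_space[OF kernel kernel] .

lemma ksq_inv: "M \<bind> ksq P = M"
  unfolding ksq_def using bind_assoc[OF K1.Tsub K1.Tsub] invM by simp

sublocale K2: kern M "ksq P"
  using ksq_meas ksq_inv by unfold_locales auto

lemma two_step:
  fixes G :: "'a \<Rightarrow> ennreal"
  assumes x: "x \<in> space M" and G: "G \<in> borel_measurable M"
  shows "ennreal (\<epsilon> x) * (\<integral>\<^sup>+y. G y \<partial>P x) \<le> (\<integral>\<^sup>+y. G y \<partial>ksq P x)"
proof -
  have Pm: "P \<in> measurable (P x) (subprob_algebra M)"
    unfolding measurable_cong_sets[OF K1.T_sets[OF x] refl] by (rule K1.Tsub)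
  have "(\<integral>\<^sup>+y. G y \<partial>ksq P x) = (\<integral>\<^sup>+z. \<integral>\<^sup>+y. G y \<partial>P z \<partial>P x)"
    unfolding ksq_def by (rule nn_integral_bind[OF G Pm])
  moreover have "ennreal (\<epsilon> x) * (\<integral>\<^sup>+y. G y \<partial>P x) \<le> (\<integral>\<^sup>+z. \<integral>\<^sup>+y. G y \<partial>P z \<partial>P x)"
  proof (rule point_minor[where G="\<lambda>z. \<integral>\<^sup>+y. G y \<partial>P z"])
    show "sets (P x) = sets M" by (rule K1.T_sets[OF x])
    show "prob_space (P x)" by (rule K1.T_prob[OF x])
    show "x \<in> space M" by (rule x)
    show "0 \<le> \<epsilon> x" using eps_range x by blast
    show "\<forall>A\<in>sets M. \<epsilon> x * indicator A x \<le> measure (P x) A" using minor x by blast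
    show "(\<lambda>z. \<integral>\<^sup>+y. G y \<partial>P z) \<in> borel_measurable M" by (rule K1.nn_meas[OF G])
  qed
  ultimately show ?thesis by simp
qed

lemma part1: "\<forall>x\<in>space M. \<forall>A\<in>sets M. measure (ksq P x) A \<ge> \<epsilon> x * measure (P x) A"
proof (intro ballI)
  fix x A assume x: "x \<in> space M" and A: "A \<in> sets M"
  have "ennreal (\<epsilon> x) * (\<integral>\<^sup>+y. indicator A y \<partial>P x) \<le> (\<integral>\<^sup>+y. indicator A y \<partial>ksq P x)"
    using A by (intro two_step x) simp
  then have "ennreal (\<epsilon> x) * ennreal (measure (P x) A) \<le> ennreal (measure (ksq P x) A)"
    using A K1.T_sets[OF x] K2.T_sets[OF x]
    by (simp add: finite_measure.emeasure_eq_measure[OF K1.T_fin[OF x]] finite_measure.emeasure_eq_measure[OF K2.T_fin[OF x]])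
  then show "\<epsilon> x * measure (P x) A \<le> measure (ksq P x) A"
    using eps_range x by (simp add: ennreal_mult[symmetric])
qed


lemma key:
  fixes f :: "'a \<Rightarrow> real" and s r :: real
  assumes f: "f \<in> borel_measurable M" and f2: "integrable M (\<lambda>x. (f x)\<^sup>2)"
    and s: "0 < s" and r: "0 \<le> r"
    and R: "(\<integral>\<^sup>+x. (\<integral>\<^sup>+y. ennreal ((f y - f x)\<^sup>2) \<partial>P x) * indicator {x\<in>space M. \<epsilon> x = 0 \<or> s \<le> inverse (\<epsilon> x)} x \<partial>M) \<le> ennreal r"
  shows "2 * dirichlet M P f \<le> 2 * s * dirichlet M (ksq P) f + r"
proof -
  define B where "B = {x\<in>space M. \<epsilon> x = 0 \<or> s \<le> inverse (\<epsilon> x)}"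
  define gP where "gP x = (\<integral>\<^sup>+y. ennreal ((f y - f x)\<^sup>2) \<partial>P x)" for x
  define gQ where "gQ x = (\<integral>\<^sup>+y. ennreal ((f y - f x)\<^sup>2) \<partial>ksq P x)" for x
  have Bm: "B \<in> sets M" unfolding B_def using eps_meas by measurable
  have gPm: "gP \<in> borel_measurable M" unfolding gP_def
    by (rule nn_integral_measurable_subprob_algebra2[OF _ K1.Tsub]) (use f in measurable)
  have DP: "(\<integral>\<^sup>+x. gP x \<partial>M) = ennreal (2 * dirichlet M P f)"
    unfolding gP_def by (rule K1.dir_eq[OF f f2])
  have DQ: "(\<integral>\<^sup>+x. gQ x \<partial>M) = ennreal (2 * dirichlet M (ksq P) f)"
    unfolding gQ_def by (rule K2.dir_eq[OF f f2])
  have dQ: "0 \<le> dirichlet M (ksq P) f" by (rule K2.dir_eq[OF f f2])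
  have split: "(\<integral>\<^sup>+x. gP x \<partial>M) = (\<integral>\<^sup>+x. gP x * indicator (space M - B) x \<partial>M) + (\<integral>\<^sup>+x. gP x * indicator B x \<partial>M)"
  proof -
    have "(\<integral>\<^sup>+x. gP x \<partial>M) = (\<integral>\<^sup>+x. gP x * indicator (space M - B) x + gP x * indicator B x \<partial>M)"
      by (intro nn_integral_cong) (auto split: split_indicator)
    also have "\<dots> = (\<integral>\<^sup>+x. gP x * indicator (space M - B) x \<partial>M) + (\<integral>\<^sup>+x. gP x * indicator B x \<partial>M)"
      using gPm Bm by (intro nn_integral_add) auto
    finally show ?thesis .
  qed
  have part_good: "(\<integral>\<^sup>+x. gP x * indicator (space M - B) x \<partial>M) \<le> (\<integral>\<^sup>+x. ennreal s * gQ x \<partial>M)"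
  proof (intro nn_integral_mono)
    fix x assume x: "x \<in> space M"
    show "gP x * indicator (space M - B) x \<le> ennreal s * gQ x"
    proof (cases "x \<in> B")
      case False
      with x have e0: "0 < \<epsilon> x" and "inverse (\<epsilon> x) < s" using eps_range by (auto simp: B_def less_le)
      then have "1 < s * \<epsilon> x" using e0 by (simp add: field_simps)
      then have "gP x \<le> ennreal (s * \<epsilon> x) * gP x"
        using mult_right_mono[of "1::ennreal" "ennreal (s * \<epsilon> x)" "gP x"] by simp
      also have "\<dots> = ennreal s * (ennreal (\<epsilon> x) * gP x)"
        using s e0 by (simp add: ennreal_mult mult.assoc)
      also have "\<dots> \<le> ennreal s * gQ x"
        unfolding gP_def gQ_def by (intro mult_left_mono two_step x) (use f in auto)
      finally show ?thesis using False x by simp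
    qed simp
  qed
  have gQm: "gQ \<in> borel_measurable M" unfolding gQ_def
    by (rule nn_integral_measurable_subprob_algebra2[OF _ K2.Tsub]) (use f in measurable)
  have cm: "(\<integral>\<^sup>+x. ennreal s * gQ x \<partial>M) = ennreal s * (\<integral>\<^sup>+x. gQ x \<partial>M)"
    using gQm by (rule nn_integral_cmult)
  have part_bad: "(\<integral>\<^sup>+x. gP x * indicator B x \<partial>M) \<le> ennreal r"
    using R unfolding gP_def B_def .
  have "ennreal (2 * dirichlet M P f) \<le> ennreal s * ennreal (2 * dirichlet M (ksq P) f) + ennreal r"
    using add_mono[OF part_good part_bad] split cm DP DQ by simp
  also have "ennreal s * ennreal (2 * dirichlet M (ksq P) f) = ennreal (2 * s * dirichlet M (ksq P) f)"
  proof -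
    have "ennreal s * ennreal (2 * dirichlet M (ksq P) f) = ennreal (s * (2 * dirichlet M (ksq P) f))"
      using s dQ by (intro ennreal_mult[symmetric]) auto
    also have "s * (2 * dirichlet M (ksq P) f) = 2 * s * dirichlet M (ksq P) f" by (simp add: mult_ac)
    finally show ?thesis .
  qed
  also have "ennreal (2 * s * dirichlet M (ksq P) f) + ennreal r = ennreal (2 * s * dirichlet M (ksq P) f + r)"
    using s r dQ by (intro ennreal_plus[symmetric]) auto
  finally have le: "ennreal (2 * dirichlet M P f) \<le> ennreal (2 * s * dirichlet M (ksq P) f + r)" .
  have nn: "0 \<le> 2 * s * dirichlet M (ksq P) f + r" using s r dQ by simp
  show ?thesis using iffD1[OF ennreal_le_iff[OF nn] le] .
qed

end

lemma young_pt:
  fixes p A m w i :: real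
  assumes p: "1 < p" and A: "0 < A" and m: "0 < m" and i: "i = 0 \<or> i = 1"
  shows "i * w\<^sup>2 \<le> A * m powr (1 - 1/p) * (\<bar>w\<bar> powr (2 * p) / (p * A powr p) + (1 - 1/p) * i / m)"
proof (cases "i = 0")
  case True
  then show ?thesis using p A m by (simp add: divide_nonneg_nonneg)
next
  case False
  with i have i1: "i = 1" by simp
  define q where "q = p / (p - 1)"
  have q: "1 < q" using p by (simp add: q_def field_simps)
  have pq: "1/p + 1/q = 1" using p by (simp add: q_def field_simps)
  define a where "a = w\<^sup>2 / A"
  define b where "b = m powr (-(1 - 1/p))"
  have a0: "0 \<le> a" using A by (simp add: a_def)
  have b0: "0 \<le> b" by (simp add: b_def)
  have Y: "a * b \<le> a powr p / p + b powr q / q"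
    by (rule Youngs_inequality[OF p q pq a0 b0])
  have wp: "(w\<^sup>2) powr p = \<bar>w\<bar> powr (2 * p)"
  proof (cases "w = 0")
    case True
    then show ?thesis by simp
  next
    case False
    have e: "\<bar>w\<bar> powr 2 = w\<^sup>2" using False by (simp add: powr_numeral)
    have "(w\<^sup>2) powr p = (\<bar>w\<bar> powr 2) powr p" by (simp only: e)
    also have "\<dots> = \<bar>w\<bar> powr (2 * p)" by (rule powr_powr)
    finally show ?thesis .
  qed
  have ap: "a powr p = \<bar>w\<bar> powr (2 * p) / A powr p"
    unfolding a_def using A by (simp add: powr_divide wp)
  have bq: "b powr q = 1 / m"
  proof -
    have "b powr q = m powr (-(1 - 1/p) * q)" by (simp add: b_def powr_powr)
    also have "-(1 - 1/p) * q = -1" using p by (simp add: q_def field_simps)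
    finally show ?thesis using m by (simp add: powr_minus_divide)
  qed
  have q1: "1 / q = 1 - 1/p" using p by (simp add: q_def field_simps)
  have c0: "0 < A * m powr (1 - 1/p)" using A m by simp
  have "w\<^sup>2 = A * m powr (1 - 1/p) * (a * b)"
  proof -
    have "m powr (1 - 1/p) * b = 1" unfolding b_def using m by (simp add: powr_add[symmetric])
    then show ?thesis using A by (simp add: a_def field_simps)
  qed
  also have "\<dots> \<le> A * m powr (1 - 1/p) * (a powr p / p + b powr q / q)"
    using Y c0 by (intro mult_left_mono) auto
  also have "a powr p / p + b powr q / q = \<bar>w\<bar> powr (2 * p) / (p * A powr p) + (1 - 1/p) * i / m"
  proof -
    have "b powr q / q = (1 / m) * (1 / q)" by (simp add: bq)
    also have "\<dots> = (1 - 1/p) * i / m" unfolding q1 using i1 by simp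
    finally have bpq: "b powr q / q = (1 - 1/p) * i / m" .
    show ?thesis unfolding bpq ap by (simp add: field_simps)
  qed
  finally show ?thesis using i1 by simp
qed

lemma young_pt2:
  fixes p A m u v i :: real
  assumes p: "1 < p" and A: "0 < A" and m: "0 < m" and i: "i = 0 \<or> i = 1"
  shows "i * (u - v)\<^sup>2 \<le> (2 * (A * m powr (1 - 1/p)) / (p * A powr p)) * \<bar>u\<bar> powr (2 * p)
     + ((2 * (A * m powr (1 - 1/p)) / (p * A powr p)) * \<bar>v\<bar> powr (2 * p)
     + (4 * (A * m powr (1 - 1/p)) * (1 - 1/p) / m) * i)"
proof -
  have "(u - v)\<^sup>2 \<le> 2 * u\<^sup>2 + 2 * v\<^sup>2"
  proof -
    have "0 \<le> (u + v)\<^sup>2" by simp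
    then show ?thesis by (simp add: power2_eq_square algebra_simps)
  qed
  then have "i * (u - v)\<^sup>2 \<le> 2 * (i * u\<^sup>2) + 2 * (i * v\<^sup>2)"
    using i by (auto simp: algebra_simps)
  also have "\<dots> \<le> 2 * (A * m powr (1 - 1/p) * (\<bar>u\<bar> powr (2 * p) / (p * A powr p) + (1 - 1/p) * i / m))
      + 2 * (A * m powr (1 - 1/p) * (\<bar>v\<bar> powr (2 * p) / (p * A powr p) + (1 - 1/p) * i / m))"
    using young_pt[OF p A m i, of u] young_pt[OF p A m i, of v] by linarith
  also have "\<dots> = (2 * (A * m powr (1 - 1/p)) / (p * A powr p)) * \<bar>u\<bar> powr (2 * p)
     + ((2 * (A * m powr (1 - 1/p)) / (p * A powr p)) * \<bar>v\<bar> powr (2 * p)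
     + (4 * (A * m powr (1 - 1/p)) * (1 - 1/p) / m) * i)"
    by (simp add: field_simps)
  finally show ?thesis .
qed

lemma sq_le_powr:
  fixes u p :: real assumes p: "1 < p"
  shows "u\<^sup>2 \<le> 1 + \<bar>u\<bar> powr (2 * p)"
proof (cases "\<bar>u\<bar> \<le> 1")
  case True
  then have "u\<^sup>2 \<le> 1" by (simp add: abs_square_le_1)
  then show ?thesis by (smt (verit) powr_ge_zero)
next
  case False
  then have l: "\<bar>u\<bar> powr 2 \<le> \<bar>u\<bar> powr (2 * p)" using p by (intro powr_mono) auto
  have e: "\<bar>u\<bar> powr 2 = u\<^sup>2" using False by (simp add: powr_numeral)
  show ?thesis using l e by linarith
qed

lemma sq_bound_lemma:
  fixes u v a b :: real
  assumes "u \<le> a" "- u \<le> b" "v \<le> a" "- v \<le> b"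
  shows "(u - v)\<^sup>2 \<le> (a + b)\<^sup>2"
proof -
  have "\<bar>u - v\<bar> \<le> a + b" using assms by linarith
  then have "\<bar>u - v\<bar>\<^sup>2 \<le> (a + b)\<^sup>2" by (intro power_mono) auto
  then show ?thesis by simp
qed

context mk begin

lemma part3:
  fixes f :: "'a \<Rightarrow> real" and s :: real
  assumes f: "f \<in> borel_measurable M" and C: "\<exists>C. AE x in M. \<bar>f x\<bar> \<le> C" and s: "0 < s"
  shows "dirichlet M P f \<le> s * dirichlet M (ksq P) f
     + measure M {x\<in>space M. \<epsilon> x = 0 \<or> s \<le> inverse (\<epsilon> x)} * (osc_norm M f)\<^sup>2"
proof -
  obtain C where Cb: "AE x in M. \<bar>f x\<bar> \<le> C" using C by blast
  note f[measurable]
  define B where "B = {x\<in>space M. \<epsilon> x = 0 \<or> s \<le> inverse (\<epsilon> x)}"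
  have Bm: "B \<in> sets M" unfolding B_def using eps_meas by measurable
  have f2: "integrable M (\<lambda>x. (f x)\<^sup>2)"
  proof (rule Bochner_Integration.integrable_bound)
    show "integrable M (\<lambda>x. C\<^sup>2)" by (rule integrable_const)
    show "(\<lambda>x. (f x)\<^sup>2) \<in> borel_measurable M" by measurable
    show "AE x in M. norm ((f x)\<^sup>2) \<le> norm (C\<^sup>2)"
    proof (rule AE_mp[OF Cb], rule AE_I2, rule impI)
      fix x assume "x \<in> space M" and h: "\<bar>f x\<bar> \<le> C"
      then have "\<bar>f x\<bar>\<^sup>2 \<le> C\<^sup>2" by (intro power_mono) auto
      then show "norm ((f x)\<^sup>2) \<le> norm (C\<^sup>2)" by simp
    qed
  qed
  define a' where "a' = esssup M (\<lambda>x. ereal (f x))"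
  define b' where "b' = esssup M (\<lambda>x. ereal (- f x))"
  have fa: "AE x in M. ereal (f x) \<le> a'" unfolding a'_def by (rule esssup_AE)
  have fb: "AE x in M. ereal (- f x) \<le> b'" unfolding b'_def by (rule esssup_AE)
  have aC: "a' \<le> ereal C" unfolding a'_def
  proof (rule esssup_I)
    show "(\<lambda>x. ereal (f x)) \<in> borel_measurable M" by measurable
    show "AE x in M. ereal (f x) \<le> ereal C"
      by (rule AE_mp[OF Cb], rule AE_I2, rule impI) (simp add: abs_le_iff)
  qed
  have bC: "b' \<le> ereal C" unfolding b'_def
  proof (rule esssup_I)
    show "(\<lambda>x. ereal (- f x)) \<in> borel_measurable M" by measurable
    show "AE x in M. ereal (- f x) \<le> ereal C"
      by (rule AE_mp[OF Cb], rule AE_I2, rule impI) (simp add: abs_le_iff)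
  qed
  have notF: "\<not> (AE x in M. False)" using AE_False emeasure_space_1 by simp
  have a_ne: "a' \<noteq> -\<infinity>"
  proof
    assume am: "a' = -\<infinity>"
    have "AE x in M. False"
      by (rule AE_mp[OF fa], rule AE_I2, rule impI) (simp add: am)
    with notF show False by blast
  qed
  have b_ne: "b' \<noteq> -\<infinity>"
  proof
    assume bm: "b' = -\<infinity>"
    have "AE x in M. False"
      by (rule AE_mp[OF fb], rule AE_I2, rule impI) (simp add: bm)
    with notF show False by blast
  qed
  obtain a where a: "a' = ereal a" using aC a_ne by (cases a') auto
  obtain b where b: "b' = ereal b" using bC b_ne by (cases b') auto
  have osc: "osc_norm M f = a + b"
    unfolding osc_norm_def a'_def[symmetric] b'_def[symmetric] a b by simp
  have good: "AE x in M. f x \<le> a \<and> - f x \<le> b"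
  proof (rule AE_mp[OF fa], rule AE_mp[OF fb], rule AE_I2, intro impI)
    fix x assume "ereal (- f x) \<le> b'" "ereal (f x) \<le> a'"
    then show "f x \<le> a \<and> - f x \<le> b" using a b by simp
  qed
  have goodm: "Measurable.pred M (\<lambda>y. f y \<le> a \<and> - f y \<le> b)" by measurable
  have good2: "AE x in M. AE y in P x. f y \<le> a \<and> - f y \<le> b"
    by (rule K1.AE_inv[OF goodm good])
  have gb: "AE x in M. (\<integral>\<^sup>+y. ennreal ((f y - f x)\<^sup>2) \<partial>P x) \<le> ennreal ((a + b)\<^sup>2)"
  proof (rule AE_mp[OF good], rule AE_mp[OF good2], rule AE_I2, intro impI)
    fix x assume x: "x \<in> space M" and h2: "AE y in P x. f y \<le> a \<and> - f y \<le> b"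
      and h1: "f x \<le> a \<and> - f x \<le> b"
    have "(\<integral>\<^sup>+y. ennreal ((f y - f x)\<^sup>2) \<partial>P x) \<le> (\<integral>\<^sup>+y. ennreal ((a + b)\<^sup>2) \<partial>P x)"
    proof (rule nn_integral_mono_AE)
      show "AE y in P x. ennreal ((f y - f x)\<^sup>2) \<le> ennreal ((a + b)\<^sup>2)"
      proof (rule AE_mp[OF h2], rule AE_I2, rule impI)
        fix y assume "f y \<le> a \<and> - f y \<le> b"
        then have "(f y - f x)\<^sup>2 \<le> (a + b)\<^sup>2" using h1 by (intro sq_bound_lemma) auto
        then show "ennreal ((f y - f x)\<^sup>2) \<le> ennreal ((a + b)\<^sup>2)" by (rule ennreal_leI)
      qed
    qed
    also have "\<dots> = ennreal ((a + b)\<^sup>2)"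
      using prob_space.emeasure_space_1[OF K1.T_prob[OF x]] by simp
    finally show "(\<integral>\<^sup>+y. ennreal ((f y - f x)\<^sup>2) \<partial>P x) \<le> ennreal ((a + b)\<^sup>2)" .
  qed
  have R: "(\<integral>\<^sup>+x. (\<integral>\<^sup>+y. ennreal ((f y - f x)\<^sup>2) \<partial>P x) * indicator B x \<partial>M) \<le> ennreal ((a + b)\<^sup>2 * measure M B)"
  proof -
    have "(\<integral>\<^sup>+x. (\<integral>\<^sup>+y. ennreal ((f y - f x)\<^sup>2) \<partial>P x) * indicator B x \<partial>M)
        \<le> (\<integral>\<^sup>+x. ennreal ((a + b)\<^sup>2) * indicator B x \<partial>M)"
    proof (rule nn_integral_mono_AE, rule AE_mp[OF gb], rule AE_I2, rule impI)
      fix x assume "x \<in> space M" and "(\<integral>\<^sup>+y. ennreal ((f y - f x)\<^sup>2) \<partial>P x) \<le> ennreal ((a + b)\<^sup>2)"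
      then show "(\<integral>\<^sup>+y. ennreal ((f y - f x)\<^sup>2) \<partial>P x) * indicator B x \<le> ennreal ((a + b)\<^sup>2) * indicator B x"
        by (intro mult_right_mono) simp_all
    qed
    also have "\<dots> = ennreal ((a + b)\<^sup>2) * emeasure M B" using Bm by (rule nn_integral_cmult_indicator)
    also have "\<dots> = ennreal ((a + b)\<^sup>2 * measure M B)" by (simp add: emeasure_eq_measure ennreal_mult)
    finally show ?thesis .
  qed
  have k: "2 * dirichlet M P f \<le> 2 * s * dirichlet M (ksq P) f + (a + b)\<^sup>2 * measure M B"
  proof (rule key[OF f f2 s])
    show "0 \<le> (a + b)\<^sup>2 * measure M B" by simp
    show "(\<integral>\<^sup>+x. (\<integral>\<^sup>+y. ennreal ((f y - f x)\<^sup>2) \<partial>P x) * indicator {x\<in>space M. \<epsilon> x = 0 \<or> s \<le> inverse (\<epsilon> x)} x \<partial>M) \<le> ennreal ((a + b)\<^sup>2 * measure M B)"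
      using R unfolding B_def .
  qed
  have nn: "0 \<le> measure M B * (a + b)\<^sup>2" by simp
  have e: "2 * s * dirichlet M (ksq P) f = 2 * (s * dirichlet M (ksq P) f)" by simp
  have "dirichlet M P f \<le> s * dirichlet M (ksq P) f + measure M B * (a + b)\<^sup>2"
    using k nn unfolding e mult.commute[of "(a + b)\<^sup>2"] by linarith
  then show ?thesis unfolding osc B_def .
qed

end

context mk begin

lemma part2_R:
  fixes f :: "'a \<Rightarrow> real" and s p A K :: real and B :: "'a set"
  assumes p: "1 < p" and f: "f \<in> borel_measurable M" and Bm: "B \<in> sets M"
    and KK: "(\<integral>\<^sup>+x. ennreal (\<bar>f x\<bar> powr (2 * p)) \<partial>M) = ennreal K"
    and A0: "0 < A" and KA: "K \<le> A powr p" and K0: "0 \<le> K"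
  shows "(\<integral>\<^sup>+x. (\<integral>\<^sup>+y. ennreal ((f y - f x)\<^sup>2) \<partial>P x) * indicator B x \<partial>M)
     \<le> ennreal (4 * A * measure M B powr (1 - 1/p))"
proof (cases "measure M B = 0")
  case True
  then have "B \<in> null_sets M" using Bm by (simp add: null_sets_def emeasure_eq_measure)
  then have nb: "AE x in M. x \<notin> B" by (rule AE_not_in)
  have "(\<integral>\<^sup>+x. (\<integral>\<^sup>+y. ennreal ((f y - f x)\<^sup>2) \<partial>P x) * indicator B x \<partial>M) = (\<integral>\<^sup>+x. 0 \<partial>M)"
    by (rule nn_integral_cong_AE, rule AE_mp[OF nb], rule AE_I2, rule impI) simp
  then show ?thesis by simp
next
  case False
  note f[measurable]
  define m where "m = measure M B"
  have m: "0 < m" using False by (simp add: m_def zero_less_measure_iff)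
  define c where "c = A * m powr (1 - 1/p)"
  define \<alpha> where "\<alpha> = 2 * c / (p * A powr p)"
  define \<beta> where "\<beta> = 4 * c * (1 - 1/p) / m"
  have c0: "0 \<le> c" using A0 m by (simp add: c_def)
  have \<alpha>0: "0 \<le> \<alpha>" using c0 p A0 by (simp add: \<alpha>_def)
  have \<beta>0: "0 \<le> \<beta>" using c0 p m by (simp add: \<beta>_def)
  define I where "I x = (\<integral>\<^sup>+y. ennreal (\<bar>f y\<bar> powr (2 * p)) \<partial>P x)" for x
  have fpm: "(\<lambda>y. ennreal (\<bar>f y\<bar> powr (2 * p))) \<in> borel_measurable M" by measurable
  have Im: "I \<in> borel_measurable M" unfolding I_def by (rule K1.nn_meas[OF fpm])
  have pt: "(\<integral>\<^sup>+y. ennreal ((f y - f x)\<^sup>2) \<partial>P x) * indicator B x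
      \<le> ennreal \<alpha> * I x + ennreal \<alpha> * ennreal (\<bar>f x\<bar> powr (2 * p)) + ennreal \<beta> * indicator B x"
    if x: "x \<in> space M" for x
  proof (cases "x \<in> B")
    case False
    then show ?thesis by simp
  next
    case True
    have sets: "sets (P x) = sets M" by (rule K1.T_sets[OF x])
    have m1: "(\<lambda>y. ennreal \<alpha> * ennreal (\<bar>f y\<bar> powr (2 * p))) \<in> borel_measurable (P x)"
      unfolding measurable_cong_sets[OF sets refl] by measurable
    have "(\<integral>\<^sup>+y. ennreal ((f y - f x)\<^sup>2) \<partial>P x)
       \<le> (\<integral>\<^sup>+y. ennreal \<alpha> * ennreal (\<bar>f y\<bar> powr (2 * p)) + ennreal (\<alpha> * \<bar>f x\<bar> powr (2 * p) + \<beta>) \<partial>P x)"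
    proof (rule nn_integral_mono)
      fix y assume "y \<in> space (P x)"
      have "1 * (f y - f x)\<^sup>2 \<le> \<alpha> * \<bar>f y\<bar> powr (2 * p) + (\<alpha> * \<bar>f x\<bar> powr (2 * p) + \<beta> * 1)"
        unfolding \<alpha>_def \<beta>_def c_def by (rule young_pt2[OF p A0 m]) simp
      then have "ennreal ((f y - f x)\<^sup>2) \<le> ennreal (\<alpha> * \<bar>f y\<bar> powr (2 * p) + (\<alpha> * \<bar>f x\<bar> powr (2 * p) + \<beta>))"
        by (intro ennreal_leI) simp
      also have "\<dots> = ennreal \<alpha> * ennreal (\<bar>f y\<bar> powr (2 * p)) + ennreal (\<alpha> * \<bar>f x\<bar> powr (2 * p) + \<beta>)"
        using \<alpha>0 \<beta>0 by (simp add: ennreal_plus ennreal_mult)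
      finally show "ennreal ((f y - f x)\<^sup>2) \<le> ennreal \<alpha> * ennreal (\<bar>f y\<bar> powr (2 * p)) + ennreal (\<alpha> * \<bar>f x\<bar> powr (2 * p) + \<beta>)" .
    qed
    also have "\<dots> = (\<integral>\<^sup>+y. ennreal \<alpha> * ennreal (\<bar>f y\<bar> powr (2 * p)) \<partial>P x) + (\<integral>\<^sup>+y. ennreal (\<alpha> * \<bar>f x\<bar> powr (2 * p) + \<beta>) \<partial>P x)"
      by (rule nn_integral_add[OF m1]) simp
    also have "(\<integral>\<^sup>+y. ennreal \<alpha> * ennreal (\<bar>f y\<bar> powr (2 * p)) \<partial>P x) = ennreal \<alpha> * I x"
      unfolding I_def by (rule nn_integral_cmult) (unfold measurable_cong_sets[OF sets refl], rule fpm)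
    also have "(\<integral>\<^sup>+y. ennreal (\<alpha> * \<bar>f x\<bar> powr (2 * p) + \<beta>) \<partial>P x) = ennreal (\<alpha> * \<bar>f x\<bar> powr (2 * p) + \<beta>)"
      using prob_space.emeasure_space_1[OF K1.T_prob[OF x]] by simp
    also have "\<dots> = ennreal \<alpha> * ennreal (\<bar>f x\<bar> powr (2 * p)) + ennreal \<beta>"
      using \<alpha>0 \<beta>0 by (simp add: ennreal_plus ennreal_mult)
    finally show ?thesis using True by (simp add: add.assoc)
  qed
  have "(\<integral>\<^sup>+x. (\<integral>\<^sup>+y. ennreal ((f y - f x)\<^sup>2) \<partial>P x) * indicator B x \<partial>M)
     \<le> (\<integral>\<^sup>+x. ennreal \<alpha> * I x + ennreal \<alpha> * ennreal (\<bar>f x\<bar> powr (2 * p)) + ennreal \<beta> * indicator B x \<partial>M)"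
    by (rule nn_integral_mono) (rule pt)
  also have "\<dots> = (\<integral>\<^sup>+x. ennreal \<alpha> * I x \<partial>M) + (\<integral>\<^sup>+x. ennreal \<alpha> * ennreal (\<bar>f x\<bar> powr (2 * p)) \<partial>M)
      + (\<integral>\<^sup>+x. ennreal \<beta> * indicator B x \<partial>M)"
  proof -
    have "(\<integral>\<^sup>+x. ennreal \<alpha> * I x + ennreal \<alpha> * ennreal (\<bar>f x\<bar> powr (2 * p)) + ennreal \<beta> * indicator B x \<partial>M)
      = (\<integral>\<^sup>+x. ennreal \<alpha> * I x + ennreal \<alpha> * ennreal (\<bar>f x\<bar> powr (2 * p)) \<partial>M) + (\<integral>\<^sup>+x. ennreal \<beta> * indicator B x \<partial>M)"
      by (rule nn_integral_add) (use Im Bm in measurable)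
    also have "(\<integral>\<^sup>+x. ennreal \<alpha> * I x + ennreal \<alpha> * ennreal (\<bar>f x\<bar> powr (2 * p)) \<partial>M)
      = (\<integral>\<^sup>+x. ennreal \<alpha> * I x \<partial>M) + (\<integral>\<^sup>+x. ennreal \<alpha> * ennreal (\<bar>f x\<bar> powr (2 * p)) \<partial>M)"
      by (rule nn_integral_add) (use Im in measurable)
    finally show ?thesis .
  qed
  also have "(\<integral>\<^sup>+x. ennreal \<alpha> * I x \<partial>M) = ennreal \<alpha> * ennreal K"
  proof -
    have "(\<integral>\<^sup>+x. ennreal \<alpha> * I x \<partial>M) = ennreal \<alpha> * (\<integral>\<^sup>+x. I x \<partial>M)"
      by (rule nn_integral_cmult[OF Im])
    also have "(\<integral>\<^sup>+x. I x \<partial>M) = ennreal K" unfolding I_def K1.nn_inv[OF fpm] by (rule KK)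
    finally show ?thesis .
  qed
  also have "(\<integral>\<^sup>+x. ennreal \<alpha> * ennreal (\<bar>f x\<bar> powr (2 * p)) \<partial>M) = ennreal \<alpha> * ennreal K"
    by (subst nn_integral_cmult[OF fpm]) (simp only: KK)
  also have "(\<integral>\<^sup>+x. ennreal \<beta> * indicator B x \<partial>M) = ennreal \<beta> * ennreal m"
    using Bm by (simp add: nn_integral_cmult_indicator emeasure_eq_measure m_def)
  also have "ennreal \<alpha> * ennreal K + ennreal \<alpha> * ennreal K + ennreal \<beta> * ennreal m = ennreal (2 * \<alpha> * K + \<beta> * m)"
  proof -
    have e1: "ennreal \<alpha> * ennreal K = ennreal (\<alpha> * K)" using \<alpha>0 K0 by (intro ennreal_mult[symmetric])
    have e2: "ennreal \<beta> * ennreal m = ennreal (\<beta> * m)" using \<beta>0 m by (intro ennreal_mult[symmetric]) auto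
    have p0: "0 \<le> \<alpha> * K" "0 \<le> \<beta> * m" using \<alpha>0 \<beta>0 K0 m by auto
    have e3: "ennreal (\<alpha> * K) + ennreal (\<alpha> * K) = ennreal (\<alpha> * K + \<alpha> * K)"
      by (rule ennreal_plus[symmetric, OF p0(1) p0(1)])
    have p1: "0 \<le> \<alpha> * K + \<alpha> * K" using p0 by linarith
    have e4: "ennreal (\<alpha> * K + \<alpha> * K) + ennreal (\<beta> * m) = ennreal (\<alpha> * K + \<alpha> * K + \<beta> * m)"
      by (rule ennreal_plus[symmetric, OF p1 p0(2)])
    have e5: "\<alpha> * K + \<alpha> * K + \<beta> * m = 2 * \<alpha> * K + \<beta> * m" by simp
    show ?thesis unfolding e1 e2 e3 e4 e5 ..
  qed
  also have "2 * \<alpha> * K + \<beta> * m \<le> 4 * A * measure M B powr (1 - 1/p)"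
  proof -
    have Ap: "0 < A powr p" using A0 by simp
    have "K / A powr p \<le> 1" using KA Ap by simp
    then have "2 * \<alpha> * K = 4 * c * (K / A powr p) / p" by (simp add: \<alpha>_def field_simps)
    also have "\<dots> \<le> 4 * c * 1 / p" using \<open>K / A powr p \<le> 1\<close> c0 p
      by (intro divide_right_mono mult_left_mono) auto
    finally have 1: "2 * \<alpha> * K \<le> 4 * c / p" by simp
    have 2: "\<beta> * m = 4 * c * (1 - 1/p)" using m by (simp add: \<beta>_def)
    have "2 * \<alpha> * K + \<beta> * m \<le> 4 * c / p + 4 * c * (1 - 1/p)" using 1 2 by linarith
    also have "\<dots> = 4 * c" using p by (simp add: field_simps)
    finally show ?thesis by (simp add: c_def m_def mult.assoc)
  qed
  finally show ?thesis by (simp add: ennreal_leI)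
qed

end

context mk begin

lemma part2:
  fixes f :: "'a \<Rightarrow> real" and s p :: real
  assumes p: "1 < p" and f: "f \<in> borel_measurable M"
    and fi: "integrable M (\<lambda>x. \<bar>f x\<bar> powr (2 * p))" and s: "0 < s"
  shows "dirichlet M P f \<le> s * dirichlet M (ksq P) f
    + measure M {x\<in>space M. \<epsilon> x = 0 \<or> s \<le> inverse (\<epsilon> x)} powr (1 - 1 / p)
      * (4 * (lr_norm M (2 * p) f)\<^sup>2)"
proof -
  note f[measurable]
  define B where "B = {x\<in>space M. \<epsilon> x = 0 \<or> s \<le> inverse (\<epsilon> x)}"
  have Bm: "B \<in> sets M" unfolding B_def using eps_meas by measurable
  define K where "K = (\<integral>x. \<bar>f x\<bar> powr (2 * p) \<partial>M)"
  have K0: "0 \<le> K" unfolding K_def by (rule integral_nonneg_AE, rule AE_I2) simp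
  have KK: "(\<integral>\<^sup>+x. ennreal (\<bar>f x\<bar> powr (2 * p)) \<partial>M) = ennreal K"
    unfolding K_def by (rule nn_integral_eq_integral[OF fi], rule AE_I2) simp
  have f2: "integrable M (\<lambda>x. (f x)\<^sup>2)"
  proof (rule Bochner_Integration.integrable_bound)
    show "integrable M (\<lambda>x. 1 + \<bar>f x\<bar> powr (2 * p))"
      by (rule Bochner_Integration.integrable_add[OF integrable_const fi])
    show "(\<lambda>x. (f x)\<^sup>2) \<in> borel_measurable M" by measurable
    show "AE x in M. norm ((f x)\<^sup>2) \<le> norm (1 + \<bar>f x\<bar> powr (2 * p))"
    proof (rule AE_I2)
      fix x
      have "(f x)\<^sup>2 \<le> 1 + \<bar>f x\<bar> powr (2 * p)" by (rule sq_le_powr[OF p])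
      moreover have "0 \<le> 1 + \<bar>f x\<bar> powr (2 * p)" by (smt (verit) powr_ge_zero)
      ultimately show "norm ((f x)\<^sup>2) \<le> norm (1 + \<bar>f x\<bar> powr (2 * p))" by simp
    qed
  qed
  define mq where "mq = measure M B powr (1 - 1/p)"
  have mq0: "0 \<le> mq" by (simp add: mq_def)
  define L where "L = K powr (1/p)"
  have L0: "0 \<le> L" by (simp add: L_def)
  have dQ: "0 \<le> dirichlet M (ksq P) f" by (rule K2.dir_eq(2)[OF f f2])
  have main: "dirichlet M P f \<le> s * dirichlet M (ksq P) f + 2 * (L + t) * mq" if t: "0 < t" for t
  proof -
    define A where "A = L + t"
    have A0: "0 < A" using L0 t by (simp add: A_def)
    have KA: "K \<le> A powr p"
    proof -
      have "K = L powr p" unfolding L_def using K0 p by (simp add: powr_powr)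
      also have "\<dots> \<le> A powr p" using L0 p by (intro powr_mono2) (auto simp: A_def t less_imp_le)
      finally show ?thesis .
    qed
    have R: "(\<integral>\<^sup>+x. (\<integral>\<^sup>+y. ennreal ((f y - f x)\<^sup>2) \<partial>P x) * indicator B x \<partial>M)
       \<le> ennreal (4 * A * measure M B powr (1 - 1/p))"
      by (rule part2_R[OF p f Bm KK A0 KA K0])
    have k: "2 * dirichlet M P f \<le> 2 * s * dirichlet M (ksq P) f + 4 * A * measure M B powr (1 - 1/p)"
    proof (rule key[OF f f2 s])
      show "0 \<le> 4 * A * measure M B powr (1 - 1/p)" using A0 by simp
      show "(\<integral>\<^sup>+x. (\<integral>\<^sup>+y. ennreal ((f y - f x)\<^sup>2) \<partial>P x) * indicator {x\<in>space M. \<epsilon> x = 0 \<or> s \<le> inverse (\<epsilon> x)} x \<partial>M) \<le> ennreal (4 * A * measure M B powr (1 - 1/p))"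
        using R unfolding B_def .
    qed
    have e1: "2 * s * dirichlet M (ksq P) f = 2 * (s * dirichlet M (ksq P) f)" by simp
    have e2: "4 * A * measure M B powr (1 - 1/p) = 2 * (2 * (L + t) * mq)" by (simp add: A_def mq_def)
    show ?thesis using k unfolding e1 e2 by linarith
  qed
  have lim: "dirichlet M P f \<le> s * dirichlet M (ksq P) f + 2 * L * mq"
  proof (rule field_le_epsilon)
    fix e :: real assume e: "0 < e"
    define t where "t = e / (2 * mq + 1)"
    have t0: "0 < t" using e mq0 by (simp add: t_def)
    have "2 * t * mq \<le> e"
    proof -
      have "2 * t * mq \<le> t * (2 * mq + 1)" using t0 by (simp add: algebra_simps)
      also have "\<dots> = e" using mq0 by (simp add: t_def)
      finally show ?thesis .
    qed
    moreover have "dirichlet M P f \<le> s * dirichlet M (ksq P) f + 2 * (L + t) * mq" by (rule main[OF t0])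
    moreover have "2 * (L + t) * mq = 2 * L * mq + 2 * t * mq" by (simp add: algebra_simps)
    ultimately show "dirichlet M P f \<le> s * dirichlet M (ksq P) f + 2 * L * mq + e" by linarith
  qed
  have lr: "(lr_norm M (2 * p) f)\<^sup>2 = L"
  proof -
    have "(lr_norm M (2 * p) f)\<^sup>2 = K powr (1 / (2 * p)) * K powr (1 / (2 * p))"
      unfolding lr_norm_def K_def[symmetric] by (simp add: power2_eq_square)
    also have "\<dots> = K powr (1 / (2 * p) + 1 / (2 * p))" by (rule powr_add[symmetric])
    also have "1 / (2 * p) + 1 / (2 * p) = 1 / p" by simp
    finally show ?thesis unfolding L_def .
  qed
  have "2 * L * mq \<le> mq * (4 * L)" using L0 mq0 by (simp add: mult_ac)
  with lim have "dirichlet M P f \<le> s * dirichlet M (ksq P) f + mq * (4 * L)" by linarith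
  then show ?thesis unfolding lr mq_def B_def .
qed

end


theorem theorem38:
  fixes M :: "'a measure" and P :: "'a \<Rightarrow> 'a measure" and \<epsilon> :: "'a \<Rightarrow> real"
  assumes "prob_space M"
    and kernel: "P \<in> M \<rightarrow>\<^sub>M prob_algebra M"
    and invariant: "\<forall>A\<in>sets M. (\<integral>x. measure (P x) A \<partial>M) = measure M A"
    and eps_meas: "\<epsilon> \<in> borel_measurable M"
    and eps_range: "\<forall>x\<in>space M. 0 \<le> \<epsilon> x \<and> \<epsilon> x \<le> 1"
    and minor: "\<forall>x\<in>space M. \<forall>A\<in>sets M. measure (P x) A \<ge> \<epsilon> x * indicator A x"
  shows "(\<forall>x\<in>space M. \<forall>A\<in>sets M. measure (ksq P x) A \<ge> \<epsilon> x * measure (P x) A)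
    \<and> (\<forall>p::real. \<forall>f::'a \<Rightarrow> real. \<forall>s::real.
          1 < p \<and> f \<in> borel_measurable M \<and> integrable M (\<lambda>x. \<bar>f x\<bar> powr (2 * p))
          \<and> (\<integral>x. f x \<partial>M) = 0 \<and> 0 < s \<longrightarrow>
          dirichlet M P f \<le> s * dirichlet M (ksq P) f
            + measure M {x\<in>space M. \<epsilon> x = 0 \<or> s \<le> inverse (\<epsilon> x)} powr (1 - 1 / p)
              * (4 * (lr_norm M (2 * p) f)\<^sup>2))
    \<and> (\<forall>f::'a \<Rightarrow> real. \<forall>s::real.
          f \<in> borel_measurable M \<and> (\<exists>C. AE x in M. \<bar>f x\<bar> \<le> C)
          \<and> (\<integral>x. f x \<partial>M) = 0 \<and> 0 < s \<longrightarrow>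
          dirichlet M P f \<le> s * dirichlet M (ksq P) f
            + measure M {x\<in>space M. \<epsilon> x = 0 \<or> s \<le> inverse (\<epsilon> x)}
              * (osc_norm M f)\<^sup>2)"
proof -
  interpret prob_space M by fact
  have Psub: "P \<in> M \<rightarrow>\<^sub>M subprob_algebra M" using kernel by (rule measurable_prob_algebraD)
  have Pin: "P x \<in> space (prob_algebra M)" if "x \<in> space M" for x
    using kernel that by (rule measurable_space)
  have Psets: "sets (P x) = sets M" if "x \<in> space M" for x
    using Pin[OF that] by (simp add: space_prob_algebra)
  have Pprob: "prob_space (P x)" if "x \<in> space M" for x
    using Pin[OF that] by (simp add: space_prob_algebra)
  have invM: "M \<bind> P = M"
  proof (rule measure_eqI)
    show "sets (M \<bind> P) = sets M"
      by (rule sets_bind[OF Psets not_empty])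
    fix A assume A: "A \<in> sets (M \<bind> P)"
    then have A': "A \<in> sets M" using \<open>sets (M \<bind> P) = sets M\<close> by simp
    have mm: "(\<lambda>x. measure (P x) A) \<in> borel_measurable M"
      by (rule measurable_compose[OF kernel measurable_measure_prob_algebra[OF A']])
    have ii: "integrable M (\<lambda>x. measure (P x) A)"
    proof (rule Bochner_Integration.integrable_bound)
      show "integrable M (\<lambda>x. (1::real))" by (rule integrable_const)
      show "(\<lambda>x. measure (P x) A) \<in> borel_measurable M" by (rule mm)
      show "AE x in M. norm (measure (P x) A) \<le> norm (1::real)"
      proof (rule AE_I2)
        fix x assume x: "x \<in> space M"
        show "norm (measure (P x) A) \<le> norm (1::real)"
          using prob_space.prob_le_1[OF Pprob[OF x]] by simp
      qed
    qed
    have "emeasure (M \<bind> P) A = (\<integral>\<^sup>+x. emeasure (P x) A \<partial>M)"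
      by (rule emeasure_bind[OF not_empty Psub A'])
    also have "\<dots> = (\<integral>\<^sup>+x. ennreal (measure (P x) A) \<partial>M)"
    proof (rule nn_integral_cong)
      fix x assume x: "x \<in> space M"
      show "emeasure (P x) A = ennreal (measure (P x) A)"
        by (rule finite_measure.emeasure_eq_measure[OF prob_space.axioms(1)[OF Pprob[OF x]]])
    qed
    also have "\<dots> = ennreal (\<integral>x. measure (P x) A \<partial>M)"
      by (rule nn_integral_eq_integral[OF ii], rule AE_I2) simp
    also have "(\<integral>x. measure (P x) A \<partial>M) = measure M A" using invariant A' by blast
    also have "ennreal (measure M A) = emeasure M A" by (simp add: emeasure_eq_measure)
    finally show "emeasure (M \<bind> P) A = emeasure M A" .
  qed
  interpret mk M P \<epsilon>
    by unfold_locales (use kernel invM eps_meas eps_range minor in auto)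
  show ?thesis
  proof (intro conjI allI impI)
    show "\<forall>x\<in>space M. \<forall>A\<in>sets M. \<epsilon> x * measure (P x) A \<le> measure (ksq P x) A"
      by (rule part1)
  next
    fix p :: real and f :: "'a \<Rightarrow> real" and s :: real
    assume h: "1 < p \<and> f \<in> borel_measurable M \<and> integrable M (\<lambda>x. \<bar>f x\<bar> powr (2 * p))
          \<and> (\<integral>x. f x \<partial>M) = 0 \<and> 0 < s"
    show "dirichlet M P f \<le> s * dirichlet M (ksq P) f
            + measure M {x\<in>space M. \<epsilon> x = 0 \<or> s \<le> inverse (\<epsilon> x)} powr (1 - 1 / p)
              * (4 * (lr_norm M (2 * p) f)\<^sup>2)"
      using h by (intro part2) auto
  next
    fix f :: "'a \<Rightarrow> real" and s :: real
    assume h: "f \<in> borel_measurable M \<and> (\<exists>C. AE x in M. \<bar>f x\<bar> \<le> C)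
          \<and> (\<integral>x. f x \<partial>M) = 0 \<and> 0 < s"
    show "dirichlet M P f \<le> s * dirichlet M (ksq P) f
            + measure M {x\<in>space M. \<epsilon> x = 0 \<or> s \<le> inverse (\<epsilon> x)}
              * (osc_norm M f)\<^sup>2"
      using h by (intro part3) auto
  qed
qed

end
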